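(* Consider linear regression with noise in the input in the limit $N\to\infty$ with $D$ fixed. Let $K:=A+B$, $U:=\mathbf{u}\mathbf{u}^{\mathrm T}$, $\mathbf{w}_*:=K^{-1}A\mathbf{u}$, and suppose the stationary distribution of the SGD parameter has mean $\mathbf{w}_*$ and covariance $\Sigma:=\mathbb{E}_{\mathbf{w}}[(\mathbf{w}-\mathbf{w}_* )(\mathbf{w}-\mathbf{w}_* )^{\mathrm T}]$. Then the averaged noise covariance is $$C=\mathbb{E}_{\mathbf{w}}[C(\mathbf{w})]=\frac1S\left(K\Sigma K+\mathrm{Tr}[K\Sigma]K+\mathrm{Tr}[AK^{-1}BU]K\right).$$
   Context: Training inputs $\tilde x_i=x_i+\eta_i$ with $x_i$ i.i.d. $\mathcal N(0,A)$ and $\eta_i$ i.i.d. $\mathcal N(0,B)$ independent of the $x_i$ ($A,B$ symmetric positive semidefinite with $A+B$ invertible); labels $y_i=\mathbf{u}^{\mathrm T}x_i$. Per-sample loss $\ell_i(\mathbf{w})=\frac12(\mathbf{w}^{\mathrm T}\tilde x_i-\mathbf{u}^{\mathrm T}x_i)^2$, $L=\frac1N\sum_i\ell_i$. Minibatch size $S$; noise covariance $C(\mathbf{w})=\frac{1}{SN}\sum_i\nabla\ell_i\nabla\ell_i^{\mathrm T}-\frac1S\nabla L\nabla L^{\mathrm T}$ taken in the limit $N\to\infty$; $\mathbb{E}_{\mathbf{w}}$ is over the stationary distribution of SGD. *)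

theory Defs
  imports "HOL-Analysis.Analysis" "HOL-Probability.Probability"
begin

definition outer :: "real^'n \<Rightarrow> real^'n \<Rightarrow> real^'n^'n" where
  "outer v w = (\<chi> i j. v $ i * w $ j)"

definition std_gauss :: "('n::finite \<Rightarrow> real) measure" where
  "std_gauss = PiM UNIV (\<lambda>_. density lborel std_normal_density)"

text \<open>mu is the centred Gaussian law N(0,A) on real^'n (possibly degenerate):
  the law of P z with z standard Gaussian and P P^T = A.\<close>
definition gaussian_law :: "(real^'n::finite) measure \<Rightarrow> real^'n^'n \<Rightarrow> bool" where
  "gaussian_law mu A \<longleftrightarrow>
     (\<exists>P. P ** transpose P = A \<and> mu = distr (std_gauss :: ('n \<Rightarrow> real) measure) borel (\<lambda>z. P *v (\<chi> i. z i)))"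

definition sample_loss :: "real^'n \<Rightarrow> real^'n \<Rightarrow> real^'n \<Rightarrow> real^'n \<Rightarrow> real" where
  "sample_loss u x eta w = (1/2) * (w \<bullet> (x + eta) - u \<bullet> x)\<^sup>2"

definition sample_grad :: "real^'n \<Rightarrow> real^'n \<Rightarrow> real^'n \<Rightarrow> real^'n \<Rightarrow> real^'n" where
  "sample_grad u x eta w = (w \<bullet> (x + eta) - u \<bullet> x) *\<^sub>R (x + eta)"

text \<open>SGD noise covariance C(w) in the limit N \<rightarrow> \<infinity>: the empirical averages over the
  training set are replaced by expectations over the data law D of (x, eta).\<close>
definition noise_cov :: "nat \<Rightarrow> ((real^'n) \<times> (real^'n)) measure \<Rightarrow> real^'n \<Rightarrow> real^'n \<Rightarrow> real^'n^'n" where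
  "noise_cov S D u w =
     (1 / real S) *\<^sub>R
       ((\<integral>p. outer (sample_grad u (fst p) (snd p) w) (sample_grad u (fst p) (snd p) w) \<partial>D)
        - outer (\<integral>p. sample_grad u (fst p) (snd p) w \<partial>D) (\<integral>p. sample_grad u (fst p) (snd p) w \<partial>D))"

end

theory Submission
  imports Defs
begin
abbreviation "N1 \<equiv> density lborel std_normal_density"

definition mom :: "nat \<Rightarrow> real" where "mom k = (\<integral>x. x ^ k \<partial>N1)"

lemma prob_N1: "prob_space N1"
  by (rule prob_space_normal_density) simp

lemma integrable_N1_pow: "integrable N1 (\<lambda>x. x ^ k)"
  by (subst integrable_density) (auto intro: integrable_std_normal_moment)

lemma mom_eq: "mom k = (\<integral>x. std_normal_density x * x ^ k \<partial>lborel)"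
  unfolding mom_def by (subst integral_density) auto

lemma mom_vals: "mom 0 = 1" "mom 1 = 0" "mom 2 = 1" "mom 3 = 0" "mom 4 = 3"
proof -
  show "mom 0 = 1" using integral_std_normal_moment_even[of 0] by (simp add: mom_eq)
  show "mom 1 = 0" using integral_std_normal_moment_odd[of 0] by (simp add: mom_eq)
  show "mom 2 = 1" using integral_std_normal_moment_even[of 1] by (simp add: mom_eq)
  show "mom 3 = 0" using integral_std_normal_moment_odd[of 1] by (simp add: mom_eq numeral_eq_Suc)
  show "mom 4 = 3" using integral_std_normal_moment_even[of 2] by (simp add: mom_eq fact_numeral)
qed

lemma prob_G: "prob_space (std_gauss :: ('n::finite \<Rightarrow> real) measure)"
  unfolding std_gauss_def by (intro prob_space_PiM prob_N1)

lemma G_mono: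
  fixes m :: "'n::finite \<Rightarrow> nat"
  shows "integrable (std_gauss :: ('n \<Rightarrow> real) measure) (\<lambda>z. \<Prod>i\<in>UNIV. z i ^ m i)"
    and "(\<integral>z. (\<Prod>i\<in>UNIV. z i ^ m i) \<partial>(std_gauss :: ('n \<Rightarrow> real) measure)) = (\<Prod>i\<in>UNIV. mom (m i))"
proof -
  interpret product_prob_space "\<lambda>_::'n. N1" UNIV
    by (intro product_prob_spaceI prob_N1)
  show "integrable (std_gauss :: ('n \<Rightarrow> real) measure) (\<lambda>z. \<Prod>i\<in>UNIV. z i ^ m i)"
    unfolding std_gauss_def
    by (rule product_integrable_prod[where f="\<lambda>i x. x ^ m i"]) (auto intro: integrable_N1_pow)
  show "(\<integral>z. (\<Prod>i\<in>UNIV. z i ^ m i) \<partial>(std_gauss :: ('n \<Rightarrow> real) measure)) = (\<Prod>i\<in>UNIV. mom (m i))"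
    unfolding std_gauss_def mom_def
    by (rule product_integral_prod[where f="\<lambda>i x. x ^ m i"]) (auto intro: integrable_N1_pow)
qed

lemma pair_prod_int:
  fixes f g :: "'a \<Rightarrow> real"
  assumes M1: "prob_space M1" and M2: "prob_space M2"
    and f: "integrable M1 f" and g: "integrable M2 g"
  shows "integrable (M1 \<Otimes>\<^sub>M M2) (\<lambda>p. f (fst p) * g (snd p))"
    and "(\<integral>p. f (fst p) * g (snd p) \<partial>(M1 \<Otimes>\<^sub>M M2)) = integral\<^sup>L M1 f * integral\<^sup>L M2 g"
proof -
  interpret p1: prob_space M1 by fact
  interpret p2: prob_space M2 by fact
  interpret pair_sigma_finite M1 M2 by unfold_locales
  show i: "integrable (M1 \<Otimes>\<^sub>M M2) (\<lambda>p. f (fst p) * g (snd p))"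
  proof (rule Fubini_integrable)
    show "(\<lambda>p. f (fst p) * g (snd p)) \<in> borel_measurable (M1 \<Otimes>\<^sub>M M2)"
      using f g by measurable
    have "integrable M1 (\<lambda>x. norm (f x) * (\<integral>y. norm (g y) \<partial>M2))"
      using f by (intro integrable_mult_left integrable_norm) 
    then show "integrable M1 (\<lambda>x. \<integral>y. norm (f (fst (x, y)) * g (snd (x, y))) \<partial>M2)"
      by (simp add: abs_mult)
    show "AE x in M1. integrable M2 (\<lambda>y. f (fst (x, y)) * g (snd (x, y)))"
      using g by simp
  qed
  have "(\<integral>p. f (fst p) * g (snd p) \<partial>(M1 \<Otimes>\<^sub>M M2)) = (\<integral>x. \<integral>y. f (fst (x,y)) * g (snd (x,y)) \<partial>M2 \<partial>M1)"
    using integral_fst'[OF i] by simp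
  also have "\<dots> = integral\<^sup>L M1 f * integral\<^sup>L M2 g" by simp
  finally show "(\<integral>p. f (fst p) * g (snd p) \<partial>(M1 \<Otimes>\<^sub>M M2)) = integral\<^sup>L M1 f * integral\<^sup>L M2 g" .
qed

definition cc :: "('n + 'n) \<Rightarrow> ('n \<Rightarrow> real) \<times> ('n \<Rightarrow> real) \<Rightarrow> real" where
  "cc j p = (case j of Inl i \<Rightarrow> fst p i | Inr i \<Rightarrow> snd p i)"

abbreviation Z2 :: "(('n::finite \<Rightarrow> real) \<times> ('n \<Rightarrow> real)) measure" where
  "Z2 \<equiv> std_gauss \<Otimes>\<^sub>M std_gauss"

lemma prod_UNIV_sum:
  fixes h :: "('a::finite + 'b::finite) \<Rightarrow> real"
  shows "(\<Prod>j\<in>UNIV. h j) = (\<Prod>i\<in>UNIV. h (Inl i)) * (\<Prod>i\<in>UNIV. h (Inr i))"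
proof -
  have U: "(UNIV :: ('a + 'b) set) = range Inl \<union> range Inr"
  proof (rule set_eqI)
    fix x :: "'a + 'b" show "x \<in> UNIV \<longleftrightarrow> x \<in> range Inl \<union> range Inr" by (cases x) auto
  qed
  have "(\<Prod>j\<in>UNIV. h j) = (\<Prod>j\<in>range Inl. h j) * (\<Prod>j\<in>range Inr. h j)"
    unfolding U by (rule prod.union_disjoint) auto
  also have "\<dots> = (\<Prod>i\<in>UNIV. h (Inl i)) * (\<Prod>i\<in>UNIV. h (Inr i))"
    by (simp add: prod.reindex)
  finally show ?thesis .
qed

lemma Z2_mono:
  fixes m :: "('n::finite + 'n) \<Rightarrow> nat"
  shows "integrable (Z2 :: (('n \<Rightarrow> real) \<times> ('n \<Rightarrow> real)) measure) (\<lambda>x. \<Prod>j\<in>UNIV. cc j x ^ m j)"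
    and "(\<integral>x. (\<Prod>j\<in>UNIV. cc j x ^ m j) \<partial>(Z2 :: (('n \<Rightarrow> real) \<times> ('n \<Rightarrow> real)) measure)) = (\<Prod>j\<in>UNIV. mom (m j))"
proof -
  have eq: "(\<Prod>j\<in>UNIV. cc j x ^ m j) = (\<Prod>i\<in>UNIV. fst x i ^ m (Inl i)) * (\<Prod>i\<in>UNIV. snd x i ^ m (Inr i))" for x
    by (subst prod_UNIV_sum) (simp add: cc_def)
  note pp = pair_prod_int[OF prob_G prob_G G_mono(1)[of "\<lambda>i. m (Inl i)"] G_mono(1)[of "\<lambda>i. m (Inr i)"]]
  show "integrable (Z2 :: (('n \<Rightarrow> real) \<times> ('n \<Rightarrow> real)) measure) (\<lambda>x. \<Prod>j\<in>UNIV. cc j x ^ m j)"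
    unfolding eq by (rule pp(1))
  show "(\<integral>x. (\<Prod>j\<in>UNIV. cc j x ^ m j) \<partial>(Z2 :: (('n \<Rightarrow> real) \<times> ('n \<Rightarrow> real)) measure)) = (\<Prod>j\<in>UNIV. mom (m j))"
    unfolding eq pp(2) G_mono(2) by (rule prod_UNIV_sum[symmetric])
qed

lemma mom_simps: "mom 0 = 1" "mom (Suc 0) = 0" "mom (Suc (Suc 0)) = 1" "mom (Suc (Suc (Suc 0))) = 0"
  "mom (Suc (Suc (Suc (Suc 0)))) = 3"
  using mom_vals by (simp_all add: numeral_eq_Suc)

definition dl :: "'a \<Rightarrow> 'a \<Rightarrow> real" where "dl a b = (if a = b then 1 else 0)"

lemma prod_pow_ind: "(\<Prod>j\<in>UNIV. (x j :: real) ^ (if j = p then 1 else 0)) = x (p :: 'a::finite)"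
proof -
  have "(\<Prod>j\<in>UNIV. x j ^ (if j = p then 1 else 0)) = (\<Prod>j\<in>UNIV. if j = p then x j else 1)"
    by (intro prod.cong) auto
  also have "\<dots> = x p" by (simp add: prod.delta)
  finally show ?thesis .
qed

lemma mono4_eq:
  fixes x :: "'a::finite \<Rightarrow> real"
  shows "x p * x q * x r * x s = (\<Prod>j\<in>UNIV. x j ^ ((if j = p then 1 else 0) + (if j = q then 1 else 0) + (if j = r then 1 else 0) + (if j = s then 1 else 0)))"
  by (simp only: power_add prod.distrib prod_pow_ind)

lemma mono2_eq:
  fixes x :: "'a::finite \<Rightarrow> real"
  shows "x p * x q = (\<Prod>j\<in>UNIV. x j ^ ((if j = p then 1 else 0) + (if j = q then 1 else 0)))"
  by (simp only: power_add prod.distrib prod_pow_ind)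

lemma mom4_comb:
  fixes p q r s :: "'a::finite"
  shows "(\<Prod>j\<in>UNIV. mom ((if j = p then 1 else 0) + (if j = q then 1 else 0) + (if j = r then 1 else 0) + (if j = s then 1 else 0)))
     = dl p q * dl r s + dl p r * dl q s + dl p s * dl q r"
proof -
  let ?c = "\<lambda>j. (if j = p then 1 else 0) + (if j = q then 1 else 0) + (if j = r then 1 else 0) + (if j = s then (1::nat) else 0)"
  have "(\<Prod>j\<in>UNIV. mom (?c j)) = (\<Prod>j\<in>{p,q,r,s}. mom (?c j))"
    by (rule prod.mono_neutral_right) (auto simp: mom_vals)
  also have "\<dots> = dl p q * dl r s + dl p r * dl q s + dl p s * dl q r"
    by (cases "p = q"; cases "p = r"; cases "p = s"; cases "q = r"; cases "q = s"; cases "r = s")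
       (simp_all add: dl_def mom_simps insert_commute)
  finally show ?thesis .
qed

lemma mom2_comb:
  fixes p q :: "'a::finite"
  shows "(\<Prod>j\<in>UNIV. mom ((if j = p then 1 else 0) + (if j = q then 1 else 0))) = dl p q"
proof -
  let ?c = "\<lambda>j. (if j = p then 1 else 0) + (if j = q then (1::nat) else 0)"
  have "(\<Prod>j\<in>UNIV. mom (?c j)) = (\<Prod>j\<in>{p,q}. mom (?c j))"
    by (rule prod.mono_neutral_right) (auto simp: mom_vals)
  also have "\<dots> = dl p q"
    by (cases "p = q") (simp_all add: dl_def mom_simps insert_commute)
  finally show ?thesis .
qed

lemma Z2_m4:
  fixes p q r s :: "'n::finite + 'n"
  shows "integrable (Z2 :: (('n \<Rightarrow> real) \<times> ('n \<Rightarrow> real)) measure) (\<lambda>x. cc p x * cc q x * cc r x * cc s x)"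
    and "(\<integral>x. cc p x * cc q x * cc r x * cc s x \<partial>(Z2 :: (('n \<Rightarrow> real) \<times> ('n \<Rightarrow> real)) measure))
          = dl p q * dl r s + dl p r * dl q s + dl p s * dl q r"
  by (subst mono4_eq[of "\<lambda>j. cc j _"], rule Z2_mono)
     (subst mono4_eq[of "\<lambda>j. cc j _"], subst Z2_mono, rule mom4_comb)

lemma Z2_m2:
  fixes p q :: "'n::finite + 'n"
  shows "integrable (Z2 :: (('n \<Rightarrow> real) \<times> ('n \<Rightarrow> real)) measure) (\<lambda>x. cc p x * cc q x)"
    and "(\<integral>x. cc p x * cc q x \<partial>(Z2 :: (('n \<Rightarrow> real) \<times> ('n \<Rightarrow> real)) measure)) = dl p q"
  by (subst mono2_eq[of "\<lambda>j. cc j _"], rule Z2_mono)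
     (subst mono2_eq[of "\<lambda>j. cc j _"], subst Z2_mono, rule mom2_comb)

lemma outer_sum_left: "outer (\<Sum>i\<in>I. f i) w = (\<Sum>i\<in>I. outer (f i) w)"
  by (induction I rule: infinite_finite_induct) (auto simp: outer_def vec_eq_iff algebra_simps)
lemma outer_sum_right: "outer w (\<Sum>i\<in>I. f i) = (\<Sum>i\<in>I. outer w (f i))"
  by (induction I rule: infinite_finite_induct) (auto simp: outer_def vec_eq_iff algebra_simps)
lemma outer_scaleR_left: "outer (a *\<^sub>R v) w = a *\<^sub>R outer v w"
  by (auto simp: outer_def vec_eq_iff)
lemma outer_scaleR_right: "outer v (a *\<^sub>R w) = a *\<^sub>R outer v w"
  by (auto simp: outer_def vec_eq_iff)

lemma sum_dl1: "(\<Sum>m\<in>UNIV. dl l m *\<^sub>R (F m :: 'b::real_vector)) = F (l::'a::finite)"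
  by (simp add: dl_def if_distrib[of "\<lambda>x. x *\<^sub>R _"] prod.delta cong: if_cong)
lemma sum_dl2: "(\<Sum>m\<in>UNIV. dl m l *\<^sub>R (F m :: 'b::real_vector)) = F (l::'a::finite)"
  by (simp add: dl_def if_distrib[of "\<lambda>x. x *\<^sub>R _"] prod.delta cong: if_cong)

abbreviation "Z2' \<equiv> (Z2 :: (('n::finite \<Rightarrow> real) \<times> ('n \<Rightarrow> real)) measure)"

lemma Z2_grad:
  fixes c :: "('n::finite + 'n) \<Rightarrow> real" and col :: "('n + 'n) \<Rightarrow> real^'m::finite"
  defines "gg \<equiv> \<lambda>z. (\<Sum>l\<in>UNIV. c l * cc l z) *\<^sub>R (\<Sum>j\<in>UNIV. cc j z *\<^sub>R col j)"
  defines "v \<equiv> (\<Sum>l\<in>UNIV. c l *\<^sub>R col l)"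
  shows "integrable Z2' gg"
    and "integral\<^sup>L Z2' gg = v"
    and "integrable Z2' (\<lambda>z. outer (gg z) (gg z))"
    and "(\<integral>z. outer (gg z) (gg z) \<partial>Z2') =
           (\<Sum>l\<in>UNIV. c l * c l) *\<^sub>R (\<Sum>j\<in>UNIV. outer (col j) (col j)) + 2 *\<^sub>R outer v v"
proof -
  have gg_eq: "gg z = (\<Sum>l\<in>UNIV. \<Sum>j\<in>UNIV. (c l * (cc l z * cc j z)) *\<^sub>R col j)" for z
  proof -
    have "gg z = (\<Sum>j\<in>UNIV. \<Sum>l\<in>UNIV. (c l * (cc l z * cc j z)) *\<^sub>R col j)"
      by (simp add: gg_def scaleR_sum_right sum_distrib_left scaleR_sum_left mult_ac)
    then show ?thesis by (subst sum.swap)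
  qed
  show i1: "integrable Z2' gg"
    unfolding gg_eq by (intro Bochner_Integration.integrable_sum integrable_scaleR_left integrable_mult_right Z2_m2(1))
  have "integral\<^sup>L Z2' gg = (\<Sum>l\<in>UNIV. \<Sum>j\<in>UNIV. (c l * dl l j) *\<^sub>R col j)"
    unfolding gg_eq
    by (simp add: integral_sum integrable_sum Z2_m2 integrable_scaleR_left)
  also have "\<dots> = (\<Sum>l\<in>UNIV. \<Sum>j\<in>UNIV. dl l j *\<^sub>R (c l *\<^sub>R col j))"
    by (simp add: mult.commute)
  also have "\<dots> = v" by (simp only: sum_dl1 v_def)
  finally show "integral\<^sup>L Z2' gg = v" .
  define Om where "Om j k = outer (col j) (col k)" for j k
  have og_eq: "outer (gg z) (gg z) = (\<Sum>l\<in>UNIV. \<Sum>j\<in>UNIV. \<Sum>m\<in>UNIV. \<Sum>k\<in>UNIV.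
        (c l * c m * (cc l z * cc j z * cc m z * cc k z)) *\<^sub>R Om j k)" for z
    unfolding gg_eq Om_def outer_sum_left outer_scaleR_left
    unfolding outer_sum_right outer_scaleR_right scaleR_sum_right scaleR_scaleR
    by (simp add: mult_ac)
  show "integrable Z2' (\<lambda>z. outer (gg z) (gg z))"
    unfolding og_eq by (intro Bochner_Integration.integrable_sum integrable_scaleR_left integrable_mult_right Z2_m4(1))
  have "(\<integral>z. outer (gg z) (gg z) \<partial>Z2') = (\<Sum>l\<in>UNIV. \<Sum>j\<in>UNIV. \<Sum>m\<in>UNIV. \<Sum>k\<in>UNIV.
        (c l * c m * (dl l j * dl m k + dl l m * dl j k + dl l k * dl j m)) *\<^sub>R Om j k)"
    unfolding og_eq
    by (simp add: integral_sum integrable_sum Z2_m4 integrable_scaleR_left)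
  also have "\<dots> = (\<Sum>l\<in>UNIV. \<Sum>j\<in>UNIV. \<Sum>m\<in>UNIV. \<Sum>k\<in>UNIV. dl l j *\<^sub>R dl m k *\<^sub>R ((c l * c m) *\<^sub>R Om j k))
      + (\<Sum>l\<in>UNIV. \<Sum>j\<in>UNIV. \<Sum>m\<in>UNIV. \<Sum>k\<in>UNIV. dl l m *\<^sub>R dl j k *\<^sub>R ((c l * c m) *\<^sub>R Om j k))
      + (\<Sum>l\<in>UNIV. \<Sum>j\<in>UNIV. \<Sum>m\<in>UNIV. \<Sum>k\<in>UNIV. dl l k *\<^sub>R dl j m *\<^sub>R ((c l * c m) *\<^sub>R Om j k))"
    by (simp add: sum.distrib[symmetric] scaleR_add_left algebra_simps)
  also have "(\<Sum>l\<in>UNIV. \<Sum>j\<in>UNIV. \<Sum>m\<in>UNIV. \<Sum>k\<in>UNIV. dl l j *\<^sub>R dl m k *\<^sub>R ((c l * c m) *\<^sub>R Om j k))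
      = (\<Sum>l\<in>UNIV. \<Sum>m\<in>UNIV. (c l * c m) *\<^sub>R Om l m)"
    by (simp only: scaleR_sum_right[symmetric] sum_dl1 sum_dl2)
  also have "(\<Sum>l\<in>UNIV. \<Sum>j\<in>UNIV. \<Sum>m\<in>UNIV. \<Sum>k\<in>UNIV. dl l m *\<^sub>R dl j k *\<^sub>R ((c l * c m) *\<^sub>R Om j k))
      = (\<Sum>l\<in>UNIV. \<Sum>j\<in>UNIV. (c l * c l) *\<^sub>R Om j j)"
    apply (subst (2) sum.swap)
    by (simp only: scaleR_sum_right[symmetric] sum_dl1 sum_dl2)
  also have "(\<Sum>l\<in>UNIV. \<Sum>j\<in>UNIV. \<Sum>m\<in>UNIV. \<Sum>k\<in>UNIV. dl l k *\<^sub>R dl j m *\<^sub>R ((c l * c m) *\<^sub>R Om j k))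
      = (\<Sum>l\<in>UNIV. \<Sum>j\<in>UNIV. (c l * c j) *\<^sub>R Om j l)"
    by (simp only: scaleR_sum_right[symmetric] sum_dl1 sum_dl2)
  also have "(\<Sum>l\<in>UNIV. \<Sum>j\<in>UNIV. (c l * c j) *\<^sub>R Om j l) = (\<Sum>l\<in>UNIV. \<Sum>m\<in>UNIV. (c l * c m) *\<^sub>R Om l m)"
    by (subst sum.swap) (simp add: mult.commute)
  also have "(\<Sum>l\<in>UNIV. \<Sum>m\<in>UNIV. (c l * c m) *\<^sub>R Om l m) = outer v v"
    unfolding v_def Om_def outer_sum_left outer_scaleR_left outer_sum_right outer_scaleR_right scaleR_sum_right scaleR_scaleR
    by (subst sum.swap) (simp add: mult.commute)
  also have "(\<Sum>l\<in>UNIV. \<Sum>j\<in>UNIV. (c l * c l) *\<^sub>R Om j j) = (\<Sum>l\<in>UNIV. c l * c l) *\<^sub>R (\<Sum>j\<in>UNIV. outer (col j) (col j))"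
    unfolding Om_def scaleR_sum_left scaleR_sum_right by (rule sum.swap)
  finally show "(\<integral>z. outer (gg z) (gg z) \<partial>Z2') =
           (\<Sum>l\<in>UNIV. c l * c l) *\<^sub>R (\<Sum>j\<in>UNIV. outer (col j) (col j)) + 2 *\<^sub>R outer v v"
    by (simp add: scaleR_2 algebra_simps)
qed

definition colm :: "real^'n^'n \<Rightarrow> 'n \<Rightarrow> real^'n" where
  "colm P k = (\<chi> i. P $ i $ k)"

lemma mv_colm: "P *v x = (\<Sum>k\<in>UNIV. (x $ k) *\<^sub>R colm P k)"
  by (simp add: vec_eq_iff matrix_vector_mult_def colm_def sum_component mult.commute)

lemma pp_colm: "(\<Sum>k\<in>UNIV. outer (colm P k) (colm P k)) = P ** transpose P"
  by (simp add: vec_eq_iff matrix_matrix_mult_def colm_def outer_def transpose_def sum_component)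

lemma pv_colm: "(\<Sum>k\<in>UNIV. (v \<bullet> colm P k) *\<^sub>R colm P k) = (P ** transpose P) *v v"
proof -
  have "(\<Sum>k\<in>UNIV. (\<Sum>j\<in>UNIV. v $ j * P $ j $ k) * P $ i $ k) =
        (\<Sum>j\<in>UNIV. (\<Sum>k\<in>UNIV. P $ i $ k * P $ j $ k) * v $ j)" for i
    by (simp add: sum_distrib_left sum_distrib_right mult_ac) (rule sum.swap)
  then show ?thesis
    by (simp add: vec_eq_iff matrix_matrix_mult_def matrix_vector_mult_def colm_def transpose_def
      sum_component inner_vec_def)
qed

lemma pq_colm: "(\<Sum>k\<in>UNIV. (v \<bullet> colm P k) * (v \<bullet> colm P k)) = v \<bullet> ((P ** transpose P) *v v)"
proof -
  have "v \<bullet> ((P ** transpose P) *v v) = v \<bullet> (\<Sum>k\<in>UNIV. (v \<bullet> colm P k) *\<^sub>R colm P k)"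
    by (simp add: pv_colm)
  also have "\<dots> = (\<Sum>k\<in>UNIV. (v \<bullet> colm P k) * (v \<bullet> colm P k))"
    by (simp add: inner_sum_right mult.commute)
  finally show ?thesis by simp
qed

lemma sum_UNIV_sum:
  fixes h :: "('a::finite + 'b::finite) \<Rightarrow> 'c::comm_monoid_add"
  shows "(\<Sum>j\<in>UNIV. h j) = (\<Sum>i\<in>UNIV. h (Inl i)) + (\<Sum>i\<in>UNIV. h (Inr i))"
proof -
  have U: "(UNIV :: ('a + 'b) set) = range Inl \<union> range Inr"
  proof (rule set_eqI)
    fix x :: "'a + 'b" show "x \<in> UNIV \<longleftrightarrow> x \<in> range Inl \<union> range Inr" by (cases x) auto
  qed
  have "(\<Sum>j\<in>UNIV. h j) = (\<Sum>j\<in>range Inl. h j) + (\<Sum>j\<in>range Inr. h j)"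
    unfolding U by (rule sum.union_disjoint) auto
  also have "\<dots> = (\<Sum>i\<in>UNIV. h (Inl i)) + (\<Sum>i\<in>UNIV. h (Inr i))"
    by (simp add: sum.reindex)
  finally show ?thesis .
qed

lemma outer_cont: "continuous_on UNIV (\<lambda>x. outer (fst x) (snd x))"
  unfolding outer_def by (intro continuous_intros)

lemma outer_meas[measurable]:
  "f \<in> borel_measurable M \<Longrightarrow> g \<in> borel_measurable M \<Longrightarrow> (\<lambda>x. outer (f x) (g x)) \<in> borel_measurable M"
  by (rule borel_measurable_continuous_Pair[OF _ _ outer_cont])

lemma lin_meas: "(\<lambda>z. (P::real^'n^'n) *v (\<chi> i. z i)) \<in> borel_measurable (std_gauss :: ('n::finite \<Rightarrow> real) measure)"
proof -
  have eq: "(\<lambda>z. P *v (\<chi> i. z i)) = (\<lambda>z::'n \<Rightarrow> real. \<Sum>k\<in>UNIV. z k *\<^sub>R colm P k)"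
    by (simp add: mv_colm)
  show ?thesis unfolding eq std_gauss_def by measurable
qed

lemma noise_form:
  fixes P Q :: "real^'n::finite^'n" and u w :: "real^'n"
  assumes Dx: "Dx = distr std_gauss borel (\<lambda>z. P *v (\<chi> i. z i))"
    and De: "De = distr std_gauss borel (\<lambda>z. Q *v (\<chi> i. z i))"
  shows "noise_cov S (Dx \<Otimes>\<^sub>M De) u w = (1 / real S) *\<^sub>R
     ((((w - u) \<bullet> ((P ** transpose P) *v (w - u)) + w \<bullet> ((Q ** transpose Q) *v w)) *\<^sub>R (P ** transpose P + Q ** transpose Q))
      + outer ((P ** transpose P) *v (w - u) + (Q ** transpose Q) *v w) ((P ** transpose P) *v (w - u) + (Q ** transpose Q) *v w))"
proof -
  let ?T = "\<lambda>p::('n \<Rightarrow> real) \<times> ('n \<Rightarrow> real). (P *v (\<chi> i. fst p i), Q *v (\<chi> i. snd p i))"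
  have Tm: "?T \<in> measurable Z2' (borel \<Otimes>\<^sub>M borel)"
    using lin_meas[of P] lin_meas[of Q] by measurable
  have sf: "sigma_finite_measure De"
    unfolding De by (intro prob_space_imp_sigma_finite prob_space.prob_space_distr[OF prob_G] lin_meas)
  have D_eq: "Dx \<Otimes>\<^sub>M De = distr Z2' (borel \<Otimes>\<^sub>M borel) ?T"
    unfolding Dx using pair_measure_distr[OF lin_meas[of P] lin_meas[of Q]] sf De
    by (simp add: case_prod_beta')
  define sg where "sg p = sample_grad u (fst p) (snd p) w" for p :: "(real^'n) \<times> (real^'n)"
  have sgm: "sg \<in> borel_measurable (borel \<Otimes>\<^sub>M borel)"
    unfolding sg_def sample_grad_def by measurable
  have osgm: "(\<lambda>p. outer (sg p) (sg p)) \<in> borel_measurable (borel \<Otimes>\<^sub>M borel)"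
    using sgm by measurable
  define c :: "'n + 'n \<Rightarrow> real" where "c = case_sum (\<lambda>k. (w - u) \<bullet> colm P k) (\<lambda>k. w \<bullet> colm Q k)"
  define col :: "'n + 'n \<Rightarrow> real^'n" where "col = case_sum (colm P) (colm Q)"
  have sgT: "sg (?T z) = (\<Sum>l\<in>UNIV. c l * cc l z) *\<^sub>R (\<Sum>j\<in>UNIV. cc j z *\<^sub>R col j)" for z
  proof -
    have x: "P *v (\<chi> i. fst z i) = (\<Sum>k\<in>UNIV. fst z k *\<^sub>R colm P k)" by (simp add: mv_colm)
    have e: "Q *v (\<chi> i. snd z i) = (\<Sum>k\<in>UNIV. snd z k *\<^sub>R colm Q k)" by (simp add: mv_colm)
    have s1: "P *v (\<chi> i. fst z i) + Q *v (\<chi> i. snd z i) = (\<Sum>j\<in>UNIV. cc j z *\<^sub>R col j)"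
      unfolding x e by (subst sum_UNIV_sum) (simp add: cc_def col_def)
    have s2: "w \<bullet> (P *v (\<chi> i. fst z i) + Q *v (\<chi> i. snd z i)) - u \<bullet> (P *v (\<chi> i. fst z i))
        = (\<Sum>l\<in>UNIV. c l * cc l z)"
      unfolding x e by (subst sum_UNIV_sum) (simp add: cc_def c_def inner_sum_right inner_add_right
          inner_diff_left sum_subtractf algebra_simps)
    show ?thesis unfolding sg_def sample_grad_def fst_conv snd_conv s2 by (simp only: s1)
  qed
  note G = Z2_grad[of c col]
  have v_eq: "(\<Sum>l\<in>UNIV. c l *\<^sub>R col l) = (P ** transpose P) *v (w - u) + (Q ** transpose Q) *v w"
    by (subst sum_UNIV_sum) (simp add: c_def col_def pv_colm)
  have q_eq: "(\<Sum>l\<in>UNIV. c l * c l) = (w - u) \<bullet> ((P ** transpose P) *v (w - u)) + w \<bullet> ((Q ** transpose Q) *v w)"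
    by (subst sum_UNIV_sum) (simp add: c_def pq_colm)
  have k_eq: "(\<Sum>j\<in>UNIV. outer (col j) (col j)) = P ** transpose P + Q ** transpose Q"
    by (subst sum_UNIV_sum) (simp add: col_def pp_colm)
  have I1: "(\<integral>p. sg p \<partial>(Dx \<Otimes>\<^sub>M De)) = (P ** transpose P) *v (w - u) + (Q ** transpose Q) *v w"
    unfolding D_eq integral_distr[OF Tm sgm] sgT G(2) v_eq ..
  have I2: "(\<integral>p. outer (sg p) (sg p) \<partial>(Dx \<Otimes>\<^sub>M De)) =
      ((w - u) \<bullet> ((P ** transpose P) *v (w - u)) + w \<bullet> ((Q ** transpose Q) *v w)) *\<^sub>R (P ** transpose P + Q ** transpose Q)
      + 2 *\<^sub>R outer ((P ** transpose P) *v (w - u) + (Q ** transpose Q) *v w) ((P ** transpose P) *v (w - u) + (Q ** transpose Q) *v w)"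
    unfolding D_eq integral_distr[OF Tm osgm] sgT G(4) v_eq q_eq k_eq ..
  show ?thesis
    unfolding noise_cov_def sg_def[symmetric] I1 I2 by (simp add: scaleR_2 algebra_simps)
qed

lemma outer_mv: "outer (M *v a) (M *v b) = M ** outer a b ** transpose (M :: real^'n^'n)"
proof -
  have "(\<Sum>k\<in>UNIV. M $ i $ k * a $ k) * (\<Sum>l\<in>UNIV. M $ j $ l * b $ l) =
        (\<Sum>l\<in>UNIV. (\<Sum>k\<in>UNIV. M $ i $ k * (a $ k * b $ l)) * M $ j $ l)" for i j
  proof -
    have "(\<Sum>k\<in>UNIV. M $ i $ k * a $ k) * (\<Sum>l\<in>UNIV. M $ j $ l * b $ l) =
          (\<Sum>k\<in>UNIV. \<Sum>l\<in>UNIV. M $ i $ k * a $ k * (M $ j $ l * b $ l))" by (rule sum_product)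
    also have "\<dots> = (\<Sum>l\<in>UNIV. \<Sum>k\<in>UNIV. M $ i $ k * a $ k * (M $ j $ l * b $ l))" by (rule sum.swap)
    also have "\<dots> = (\<Sum>l\<in>UNIV. (\<Sum>k\<in>UNIV. M $ i $ k * (a $ k * b $ l)) * M $ j $ l)"
      by (simp add: sum_distrib_right sum_distrib_left mult_ac)
    finally show ?thesis .
  qed
  then show ?thesis
    by (simp add: vec_eq_iff outer_def matrix_matrix_mult_def matrix_vector_mult_def transpose_def)
qed

lemma trace_outer: "trace (M ** outer a b) = b \<bullet> ((M :: real^'n^'n) *v a)"
  by (simp add: trace_def matrix_matrix_mult_def outer_def inner_vec_def matrix_vector_mult_def
      sum_distrib_left mult_ac)

lemma inner_sym: "transpose M = M \<Longrightarrow> x \<bullet> ((M :: real^'n^'n) *v y) = y \<bullet> (M *v x)"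
proof -
  assume t: "transpose M = M"
  have "x \<bullet> (M *v y) = (\<Sum>i\<in>UNIV. \<Sum>j\<in>UNIV. x $ i * M $ i $ j * y $ j)"
    by (simp add: inner_vec_def matrix_vector_mult_def sum_distrib_left mult_ac)
  also have "\<dots> = (\<Sum>j\<in>UNIV. \<Sum>i\<in>UNIV. x $ i * M $ i $ j * y $ j)" by (rule sum.swap)
  also have "\<dots> = (\<Sum>j\<in>UNIV. \<Sum>i\<in>UNIV. y $ j * M $ j $ i * x $ i)"
  proof -
    have sy: "M $ j $ i = M $ i $ j" for i j
    proof -
      have "transpose M $ i $ j = M $ i $ j" using t by simp
      then show ?thesis by (simp add: transpose_def)
    qed
    show ?thesis by (simp add: sy mult_ac)
  qed
  also have "\<dots> = y \<bullet> (M *v x)"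
    by (simp add: inner_vec_def matrix_vector_mult_def sum_distrib_left mult_ac)
  finally show ?thesis .
qed

lemma trace_scaleR: "trace (c *\<^sub>R (M :: real^'n^'n)) = c * trace M"
  by (simp add: trace_def sum_distrib_left)

lemma matrix_add_rdistrib': "((B + C) ** A) = (B ** A) + (C ** (A :: real^'n^'n))"
  by (simp add: vec_eq_iff matrix_matrix_mult_def sum.distrib distrib_right)

lemma lin_F: "bounded_linear (\<lambda>M. c *\<^sub>R (trace (K ** M) *\<^sub>R K + K ** M ** (K :: real^'n^'n)))"
proof -
  have "linear (\<lambda>M. c *\<^sub>R (trace (K ** M) *\<^sub>R K + K ** M ** (K :: real^'n^'n)))"
  proof (rule linearI)
    fix M N :: "real^'n^'n"
    show "c *\<^sub>R (trace (K ** (M + N)) *\<^sub>R K + K ** (M + N) ** K) =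
          c *\<^sub>R (trace (K ** M) *\<^sub>R K + K ** M ** K) + c *\<^sub>R (trace (K ** N) *\<^sub>R K + K ** N ** K)"
      by (simp only: matrix_add_ldistrib matrix_add_rdistrib' trace_add scaleR_add_left scaleR_add_right add_ac)
  next
    fix a and M :: "real^'n^'n"
    show "c *\<^sub>R (trace (K ** (a *\<^sub>R M)) *\<^sub>R K + K ** (a *\<^sub>R M) ** K) =
          a *\<^sub>R (c *\<^sub>R (trace (K ** M) *\<^sub>R K + K ** M ** K))"
      by (simp only: matrix_scalar_ac scalar_matrix_assoc[symmetric] trace_scaleR scaleR_scaleR
            scaleR_add_right mult_ac)
  qed
  then show ?thesis by (simp add: linear_conv_bounded_linear)
qed

theorem proposition9:
  fixes A B :: "real^'n^'n" and u :: "real^'n" and S :: nat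
    and Dx Deta :: "(real^'n) measure" and Mw :: "(real^'n) measure"
    and Sigma :: "real^'n^'n"
  assumes symA: "transpose A = A" and psdA: "\<forall>v. 0 \<le> v \<bullet> (A *v v)"
    and symB: "transpose B = B" and psdB: "\<forall>v. 0 \<le> v \<bullet> (B *v v)"
    and invK: "invertible (A + B)"
    and S: "S \<ge> 1"
    and gx: "gaussian_law Dx A" and geta: "gaussian_law Deta B"
    and Mw_prob: "prob_space Mw" and Mw_sets: "sets Mw = sets borel"
    and mean_int: "integrable Mw (\<lambda>w. w)"
    and mean: "(\<integral>w. w \<partial>Mw) = matrix_inv (A + B) *v (A *v u)"
    and cov_int: "integrable Mw (\<lambda>w. outer (w - matrix_inv (A + B) *v (A *v u))
                                              (w - matrix_inv (A + B) *v (A *v u)))"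
    and cov: "(\<integral>w. outer (w - matrix_inv (A + B) *v (A *v u))
                           (w - matrix_inv (A + B) *v (A *v u)) \<partial>Mw) = Sigma"
  shows "(\<integral>w. noise_cov S (Dx \<Otimes>\<^sub>M Deta) u w \<partial>Mw) =
     (1 / real S) *\<^sub>R
       ((A + B) ** Sigma ** (A + B)
        + trace ((A + B) ** Sigma) *\<^sub>R (A + B)
        + trace (A ** matrix_inv (A + B) ** B ** outer u u) *\<^sub>R (A + B))"
proof -
  obtain P where PA: "P ** transpose P = A"
    and Dx: "Dx = distr (std_gauss :: ('n \<Rightarrow> real) measure) borel (\<lambda>z. P *v (\<chi> i. z i))"
    using gx unfolding gaussian_law_def by blast
  obtain Q where QB: "Q ** transpose Q = B"
    and De: "Deta = distr (std_gauss :: ('n \<Rightarrow> real) measure) borel (\<lambda>z. Q *v (\<chi> i. z i))"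
    using geta unfolding gaussian_law_def by blast
  define K where "K = A + B"
  define Ki where "Ki = matrix_inv K"
  define ws where "ws = Ki *v (A *v u)"
  define c0 where "c0 = trace (A ** Ki ** B ** outer u u)"
  have KKi: "K ** Ki = mat 1 \<and> Ki ** K = mat 1"
    unfolding Ki_def matrix_inv_def
    by (rule someI_ex) (use invK in \<open>simp add: invertible_def K_def\<close>)
  have symK: "transpose K = K"
    using symA symB by (simp add: K_def vec_eq_iff transpose_def)
  have Kws: "K *v ws = A *v u"
    using KKi by (simp add: ws_def matrix_vector_mul_assoc matrix_mul_assoc)
  have c0_eq: "c0 = u \<bullet> (A *v u) - ws \<bullet> (A *v u)"
  proof -
    have "(A ** Ki ** B) *v u = A *v (Ki *v (B *v u))"
      by (simp add: matrix_vector_mul_assoc matrix_mul_assoc)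
    also have "B *v u = K *v u - A *v u" by (simp add: K_def matrix_vector_mult_add_rdistrib)
    also have "Ki *v (K *v u - A *v u) = u - ws"
      using KKi by (simp add: matrix_vector_mult_diff_distrib matrix_vector_mul_assoc ws_def)
    finally have "(A ** Ki ** B) *v u = A *v u - A *v ws"
      by (simp add: matrix_vector_mult_diff_distrib)
    then have "c0 = u \<bullet> (A *v u) - u \<bullet> (A *v ws)"
      by (simp add: c0_def trace_outer inner_diff_right)
    also have "u \<bullet> (A *v ws) = ws \<bullet> (A *v u)" by (rule inner_sym[OF symA])
    finally show ?thesis .
  qed
  define F where "F M = (1 / real S) *\<^sub>R (trace (K ** M) *\<^sub>R K + K ** M ** K)" for M
  define Cst where "Cst = (1 / real S) *\<^sub>R (c0 *\<^sub>R K)"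
  have NF: "noise_cov S (Dx \<Otimes>\<^sub>M Deta) u w = F (outer (w - ws) (w - ws)) + Cst" for w
  proof -
    have vv: "A *v (w - u) + B *v w = K *v (w - ws)"
      using Kws by (simp add: K_def matrix_vector_mult_diff_distrib matrix_vector_mult_add_rdistrib algebra_simps)
    have f1: "u \<bullet> (A *v w) = w \<bullet> (A *v u)" by (rule inner_sym[OF symA])
    have f2: "ws \<bullet> (K *v w) = w \<bullet> (A *v u)" using inner_sym[OF symK, of ws w] Kws by simp
    have q: "(w - u) \<bullet> (A *v (w - u)) + w \<bullet> (B *v w) = (w - ws) \<bullet> (K *v (w - ws)) + c0"
    proof -
      have "(w - ws) \<bullet> (K *v (w - ws)) = w \<bullet> (K *v w) - 2 * (w \<bullet> (A *v u)) + ws \<bullet> (A *v u)"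
        using f2 Kws by (simp add: matrix_vector_mult_diff_distrib inner_diff_left inner_diff_right)
      moreover have "w \<bullet> (K *v w) = w \<bullet> (A *v w) + w \<bullet> (B *v w)"
        by (simp add: K_def matrix_vector_mult_add_rdistrib inner_add_right)
      moreover have "(w - u) \<bullet> (A *v (w - u)) = w \<bullet> (A *v w) - 2 * (w \<bullet> (A *v u)) + u \<bullet> (A *v u)"
        using f1 by (simp add: matrix_vector_mult_diff_distrib inner_diff_left inner_diff_right)
      ultimately show ?thesis using c0_eq by simp
    qed
    have "noise_cov S (Dx \<Otimes>\<^sub>M Deta) u w = (1 / real S) *\<^sub>R
       ((((w - u) \<bullet> (A *v (w - u)) + w \<bullet> (B *v w)) *\<^sub>R K) + outer (A *v (w - u) + B *v w) (A *v (w - u) + B *v w))"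
      using noise_form[OF Dx De, of S u w] by (simp add: PA QB K_def)
    also have "\<dots> = (1 / real S) *\<^sub>R
       (((w - ws) \<bullet> (K *v (w - ws)) + c0) *\<^sub>R K + K ** outer (w - ws) (w - ws) ** K)"
      unfolding q vv outer_mv symK ..
    also have "\<dots> = F (outer (w - ws) (w - ws)) + Cst"
      unfolding F_def Cst_def trace_outer by (simp add: scaleR_add_left scaleR_add_right algebra_simps)
    finally show ?thesis .
  qed
  interpret Mw: prob_space Mw by (rule Mw_prob)
  have ws_eq: "matrix_inv (A + B) *v (A *v u) = ws" by (simp add: ws_def Ki_def K_def)
  have bl: "bounded_linear F" unfolding F_def by (rule lin_F)
  have ci: "integrable Mw (\<lambda>w. outer (w - ws) (w - ws))" using cov_int unfolding ws_eq .
  have cv: "(\<integral>w. outer (w - ws) (w - ws) \<partial>Mw) = Sigma" using cov unfolding ws_eq .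
  have "(\<integral>w. noise_cov S (Dx \<Otimes>\<^sub>M Deta) u w \<partial>Mw) = (\<integral>w. F (outer (w - ws) (w - ws)) + Cst \<partial>Mw)"
    unfolding NF ..
  also have "\<dots> = (\<integral>w. F (outer (w - ws) (w - ws)) \<partial>Mw) + (\<integral>w. Cst \<partial>Mw)"
    by (rule Bochner_Integration.integral_add[OF integrable_bounded_linear[OF bl ci] Mw.integrable_const])
  also have "(\<integral>w. F (outer (w - ws) (w - ws)) \<partial>Mw) = F Sigma"
    using integral_bounded_linear[OF bl ci] cv by simp
  also have "(\<integral>w. Cst \<partial>Mw) = Cst" by (simp add: Mw.prob_space)
  finally show ?thesis
    unfolding F_def Cst_def c0_def K_def Ki_def by (simp add: algebra_simps)
qed

end
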